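(* Let $X$ be a mild $\mathcal M$-set and $f\in\mathcal M$. Then the map $X\to X$, $x\mapsto f.x$, is injective.
   Context: $\omega=\{1,2,3,\dots\}$, $\mathcal M$ the monoid of injections $\omega\to\omega$; an $\mathcal M$-set is a set with left $\mathcal M$-action. For $A\subset\omega$, $\mathcal M_A$ is the submonoid of injections fixing $A$ elementwise, and $x$ is supported on $A$ if $g.x=x$ for all $g\in\mathcal M_A$. An $\mathcal M$-set $X$ is mild if every $x\in X$ is supported on some co-infinite set $A\subset\omega$ (i.e.\ $\omega\setminus A$ infinite). *)

theory Defs
  imports Main
begin

definition omega :: "nat set" where "omega = {1..}"

(* The monoid M of injections omega -> omega, each represented canonically by a
   function nat => nat which is injective, maps omega into omega and fixes 0
   (so that every injection of omega has exactly one representative). *)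
definition Mon :: "(nat \<Rightarrow> nat) set" where
  "Mon = {f. inj f \<and> f ` omega \<subseteq> omega \<and> f 0 = 0}"

definition M_set :: "'x set \<Rightarrow> ((nat \<Rightarrow> nat) \<Rightarrow> 'x \<Rightarrow> 'x) \<Rightarrow> bool" where
  "M_set X act \<longleftrightarrow>
     (\<forall>f\<in>Mon. \<forall>x\<in>X. act f x \<in> X) \<and>
     (\<forall>x\<in>X. act id x = x) \<and>
     (\<forall>f\<in>Mon. \<forall>g\<in>Mon. \<forall>x\<in>X. act (f \<circ> g) x = act f (act g x))"

definition Mon_fix :: "nat set \<Rightarrow> (nat \<Rightarrow> nat) set" where
  "Mon_fix A = {g \<in> Mon. \<forall>a\<in>A. g a = a}"

definition supported_on :: "((nat \<Rightarrow> nat) \<Rightarrow> 'x \<Rightarrow> 'x) \<Rightarrow> 'x \<Rightarrow> nat set \<Rightarrow> bool" where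
  "supported_on act x A \<longleftrightarrow> (\<forall>g\<in>Mon_fix A. act g x = x)"

definition mild :: "'x set \<Rightarrow> ((nat \<Rightarrow> nat) \<Rightarrow> 'x \<Rightarrow> 'x) \<Rightarrow> bool" where
  "mild X act \<longleftrightarrow> M_set X act \<and>
     (\<forall>x\<in>X. \<exists>A. A \<subseteq> omega \<and> infinite (omega - A) \<and> supported_on act x A)"

end

theory Submission
  imports Defs "HOL-Library.Infinite_Set" "HOL-Library.Countable_Set"
begin

lemma Mon_comp: "f \<in> Mon \<Longrightarrow> g \<in> Mon \<Longrightarrow> f \<circ> g \<in> Mon"
  unfolding Mon_def by (auto simp: inj_compose image_comp[symmetric] intro: order_trans image_mono)

lemma Mon_id: "id \<in> Mon"
  unfolding Mon_def by auto

lemma omega_mem: "x \<in> omega \<longleftrightarrow> x \<noteq> 0"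
  unfolding omega_def by auto

lemma split3:
  assumes "infinite D" "infinite C"
  shows "\<exists>T \<subseteq> D. infinite T \<and> infinite (D - T) \<and> infinite (C - T)"
proof (cases "finite (C - D)")
  case False
  obtain T1 T2 where "T1 \<subseteq> D" "T2 \<subseteq> D" "infinite T1" "infinite T2" "T1 \<inter> T2 = {}"
    using infinite_split[OF assms(1)] by metis
  moreover have "infinite (D - T1)" using \<open>T2 \<subseteq> D\<close> \<open>infinite T2\<close> \<open>T1 \<inter> T2 = {}\<close>
    by (metis Diff_Int_distrib2 Diff_cancel Diff_empty Int_Diff inf.absorb_iff2 inf_commute infinite_super)
  moreover have "infinite (C - T1)" using False \<open>T1 \<subseteq> D\<close>
    by (meson Diff_mono finite_subset order_refl)
  ultimately show ?thesis by blast
next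
  case True
  hence "infinite (C \<inter> D)" using assms(2)
    by (metis Diff_Diff_Int Diff_infinite_finite inf_commute)
  then obtain T1 T2 where T: "T1 \<subseteq> C \<inter> D" "T2 \<subseteq> C \<inter> D" "infinite T1" "infinite T2" "T1 \<inter> T2 = {}"
    using infinite_split by metis
  define T where "T = D - T1"
  have "T \<subseteq> D" unfolding T_def by auto
  moreover have "T2 \<subseteq> T" using T unfolding T_def by auto
  hence "infinite T" using T infinite_super by blast
  moreover have "D - T = T1" using T unfolding T_def by auto
  moreover have "T1 \<subseteq> C - T" using T unfolding T_def by auto
  hence "infinite (C - T)" using T infinite_super by blast
  ultimately show ?thesis using T by auto
qed

lemma extE:
  assumes S: "S \<subseteq> omega" and h: "inj_on h S" "h ` S \<subseteq> omega"
    and U: "U \<subseteq> omega - h ` S" "infinite U"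
  shows "\<exists>g\<in>Mon. (\<forall>s\<in>S. g s = h s) \<and> g ` (omega - S) \<subseteq> U"
proof -
  obtain e :: "nat \<Rightarrow> nat" where e: "inj e" "range e \<subseteq> U"
    using infinite_countable_subset U(2) by blast
  define g where "g x = (if x = 0 then 0 else if x \<in> S then h x else e x)" for x
  have "0 \<notin> S" using S by (auto simp: omega_mem)
  have "0 \<notin> U" using U by (auto simp: omega_mem)
  have gS: "\<forall>s\<in>S. g s = h s" using \<open>0 \<notin> S\<close> unfolding g_def by auto
  have gU: "g ` (omega - S) \<subseteq> U" using e unfolding g_def by (auto simp: omega_mem)
  have eU0: "\<And>n. e n \<in> U" using e by auto
  have eS: "\<And>n s. s \<in> S \<Longrightarrow> e n \<noteq> h s" using eU0 U(1) by blast
  have e0: "\<And>n. e n \<noteq> 0" using eU0 \<open>0 \<notin> U\<close> by metis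
  have h0: "\<And>s. s \<in> S \<Longrightarrow> h s \<noteq> 0" using h(2) omega_mem by blast
  have "inj g"
  proof (rule injI)
    fix x y assume gxy: "g x = g y"
    have g0: "\<And>z. g z = 0 \<Longrightarrow> z = 0" using e0 h0 unfolding g_def by (metis (full_types))
    have gs: "\<And>z. z \<in> S \<Longrightarrow> g z = h z" using \<open>0 \<notin> S\<close> unfolding g_def by auto
    have gn: "\<And>z. z \<noteq> 0 \<Longrightarrow> z \<notin> S \<Longrightarrow> g z = e z" unfolding g_def by auto
    show "x = y"
    proof (cases "x = 0 \<or> y = 0")
      case True then show ?thesis using gxy g0 by (metis g_def)
    next
      case False
      show ?thesis
      proof (cases "x \<in> S"; cases "y \<in> S")
        assume "x \<in> S" "y \<in> S" then show ?thesis using gxy gs h(1) by (metis inj_onD)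
      next
        assume "x \<in> S" "y \<notin> S" then show ?thesis using gxy gs gn eS False by metis
      next
        assume "x \<notin> S" "y \<in> S" then show ?thesis using gxy gs gn eS False by metis
      next
        assume "x \<notin> S" "y \<notin> S" then show ?thesis using gxy gn e(1) False by (metis injD)
      qed
    qed
  qed
  moreover have "g ` omega \<subseteq> omega" using h(2) eU0 U(1) unfolding g_def by (auto simp: omega_mem)
  moreover have "g 0 = 0" unfolding g_def by simp
  ultimately have "g \<in> Mon" unfolding Mon_def by auto
  then show ?thesis using gS gU by blast
qed

lemma extE2:
  assumes "\<sigma> \<in> Mon" "k \<in> Mon" "S \<subseteq> omega" "infinite (omega - k ` S)"
  shows "\<exists>g\<in>Mon. \<forall>s\<in>S. g (\<sigma> s) = k s"
proof -
  have si: "inj \<sigma>" "\<sigma> ` omega \<subseteq> omega" "inj k" "k ` omega \<subseteq> omega" using assms unfolding Mon_def by auto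
  define h where "h = k \<circ> inv \<sigma>"
  have hk: "\<forall>s\<in>S. h (\<sigma> s) = k s" using si unfolding h_def by auto
  have "h ` (\<sigma> ` S) = k ` S" using hk by (auto simp: image_iff)
  moreover have "inj_on h (\<sigma> ` S)"
  proof (rule inj_onI)
    fix a b assume "a \<in> \<sigma> ` S" "b \<in> \<sigma> ` S" "h a = h b"
    then obtain a' b' where "a' \<in> S" "b' \<in> S" "a = \<sigma> a'" "b = \<sigma> b'" by blast
    then have "k a' = k b'" using hk \<open>h a = h b\<close> by metis
    then have "a' = b'" using si(3) injD by metis
    then show "a = b" using \<open>a = \<sigma> a'\<close> \<open>b = \<sigma> b'\<close> by simp
  qed
  moreover have "\<sigma> ` S \<subseteq> omega" using si(2) assms(3) by blast
  moreover have "k ` S \<subseteq> omega" using si(4) assms(3) by blast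
  ultimately obtain g where "g \<in> Mon" "\<forall>s\<in>\<sigma> ` S. g s = h s"
    using extE[of "\<sigma> ` S" h "omega - k ` S"] assms(4) by auto
  then show ?thesis using hk by auto
qed

lemma bijext:
  assumes "\<sigma> \<in> Mon" "A \<subseteq> omega" "infinite (omega - A)"
  shows "\<exists>\<rho>\<in>Mon. (\<forall>a\<in>A. \<rho> a = \<sigma> a) \<and> \<rho> ` omega = omega"
proof -
  have si: "inj \<sigma>" "\<sigma> ` omega \<subseteq> omega" "\<sigma> 0 = 0" using assms(1) unfolding Mon_def by auto
  define C where "C = omega - A"
  define E where "E = omega - \<sigma> ` A"
  have "\<sigma> ` C \<subseteq> E"
  proof
    fix z assume "z \<in> \<sigma> ` C"
    then obtain c where c: "c \<in> C" "z = \<sigma> c" by blast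
    have "z \<in> omega" using c si(2) unfolding C_def by blast
    moreover have "z \<notin> \<sigma> ` A" using c si(1) unfolding C_def by (auto simp: inj_eq)
    ultimately show "z \<in> E" unfolding E_def by blast
  qed
  moreover have "infinite (\<sigma> ` C)"
  proof -
    have "inj_on \<sigma> C" using si(1) by (rule inj_on_subset) simp
    then show ?thesis using assms(3) unfolding C_def by (simp add: finite_image_iff)
  qed
  ultimately have infE: "infinite E" using infinite_super by metis
  obtain g1 where g1: "bij_betw g1 (UNIV::nat set) C" using countable_infiniteE'[OF countableI_type, of C] assms(3) unfolding C_def by metis
  obtain g2 where g2: "bij_betw g2 (UNIV::nat set) E" using countable_infiniteE'[OF countableI_type, of E] infE by metis
  define p where "p = g2 \<circ> inv_into UNIV g1"
  have p: "bij_betw p C E" unfolding p_def using bij_betw_inv_into[OF g1] g2 by (rule bij_betw_trans)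
  have pE: "p ` C = E" and pi: "inj_on p C" using p unfolding bij_betw_def by auto
  define \<rho> where "\<rho> x = (if x \<in> A then \<sigma> x else if x \<in> omega then p x else x)" for x
  have rA: "\<forall>a\<in>A. \<rho> a = \<sigma> a" unfolding \<rho>_def by auto
  have rC: "\<forall>c\<in>C. \<rho> c = p c" unfolding \<rho>_def C_def by auto
  have rO: "\<And>z. z \<notin> omega \<Longrightarrow> \<rho> z = z" unfolding \<rho>_def using assms(2) by auto
  have om: "omega = A \<union> C" using assms(2) unfolding C_def by auto
  have "\<rho> ` omega = \<rho> ` A \<union> \<rho> ` C" using om by auto
  also have "\<rho> ` A = \<sigma> ` A" using rA by auto
  also have "\<rho> ` C = p ` C" using rC by auto
  also have "\<sigma> ` A \<union> p ` C = omega"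
  proof -
    have "\<sigma> ` A \<subseteq> omega" using si(2) assms(2) by blast
    then show ?thesis using pE unfolding E_def by blast
  qed
  finally have ro: "\<rho> ` omega = omega" .
  have inO: "\<And>z. z \<in> omega \<Longrightarrow> \<rho> z \<in> omega" using ro by auto
  have "inj \<rho>"
  proof (rule injI)
    fix x y assume xy: "\<rho> x = \<rho> y"
    show "x = y"
    proof (cases "x \<in> omega"; cases "y \<in> omega")
      assume "x \<notin> omega" "y \<notin> omega" then show ?thesis using xy rO by metis
    next
      assume "x \<in> omega" "y \<notin> omega" then show ?thesis using xy rO inO by metis
    next
      assume "x \<notin> omega" "y \<in> omega" then show ?thesis using xy rO inO by metis
    next
      assume xo: "x \<in> omega" and yo: "y \<in> omega"
      show ?thesis
      proof (cases "x \<in> A"; cases "y \<in> A")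
        assume "x \<in> A" "y \<in> A" then show ?thesis using xy rA si(1) by (metis injD)
      next
        assume "x \<notin> A" "y \<notin> A"
        then have "x \<in> C" "y \<in> C" using xo yo unfolding C_def by auto
        then show ?thesis using xy rC pi by (metis inj_onD)
      next
        assume "x \<in> A" "y \<notin> A"
        then have "y \<in> C" using yo unfolding C_def by auto
        then have "\<rho> y \<in> E" using rC pE by auto
        moreover have "\<rho> x \<in> \<sigma> ` A" using rA \<open>x \<in> A\<close> by auto
        ultimately show ?thesis using xy unfolding E_def by auto
      next
        assume "x \<notin> A" "y \<in> A"
        then have "x \<in> C" using xo unfolding C_def by auto
        then have "\<rho> x \<in> E" using rC pE by auto
        moreover have "\<rho> y \<in> \<sigma> ` A" using rA \<open>y \<in> A\<close> by auto
        ultimately show ?thesis using xy unfolding E_def by auto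
      qed
    qed
  qed
  moreover have "\<rho> 0 = 0" using rO by (simp add: omega_mem)
  ultimately have "\<rho> \<in> Mon" using ro unfolding Mon_def by auto
  then show ?thesis using rA ro by blast
qed

lemma factor:
  assumes "\<sigma> \<in> Mon" "A \<subseteq> omega" "infinite (omega - A)" "M_set X act" "x \<in> X"
    "supported_on act x A" "\<rho> \<in> Mon" "\<forall>a\<in>A. \<rho> a = \<sigma> a" "\<rho> ` omega = omega"
  shows "act \<sigma> x = act \<rho> x"
proof -
  have si: "inj \<sigma>" "\<sigma> ` omega \<subseteq> omega" "\<sigma> 0 = 0" using assms(1) unfolding Mon_def by auto
  have ri: "inj \<rho>" "\<rho> 0 = 0" using assms(7) unfolding Mon_def by auto
  define k where "k x = (if x = 0 then 0 else inv_into omega \<rho> (\<sigma> x))" for x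
  have rinj: "inj_on \<rho> omega" using ri(1) by (rule inj_on_subset) simp
  have kin: "\<forall>x\<in>omega. k x \<in> omega \<and> \<rho> (k x) = \<sigma> x"
  proof
    fix x assume x: "x \<in> omega"
    hence x0: "x \<noteq> 0" by (simp add: omega_mem)
    have sx: "\<sigma> x \<in> \<rho> ` omega" using x si(2) assms(9) by blast
    have "k x = inv_into omega \<rho> (\<sigma> x)" using x0 unfolding k_def by simp
    then show "k x \<in> omega \<and> \<rho> (k x) = \<sigma> x" using inv_into_into[OF sx] f_inv_into_f[OF sx] by simp
  qed
  have rk: "\<rho> \<circ> k = \<sigma>"
  proof
    fix z show "(\<rho> \<circ> k) z = \<sigma> z"
    proof (cases "z = 0")
      case True then show ?thesis using ri(2) si(3) by (simp add: k_def)
    next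
      case False then have "z \<in> omega" by (simp add: omega_mem)
      then show ?thesis using kin by simp
    qed
  qed
  have "inj k"
  proof (rule injI)
    fix a b assume "k a = k b"
    hence "\<rho> (k a) = \<rho> (k b)" by simp
    hence "\<sigma> a = \<sigma> b" using rk by (metis comp_apply)
    thus "a = b" by (rule injD[OF si(1)])
  qed
  moreover have "k ` omega \<subseteq> omega" using kin by auto
  moreover have "k 0 = 0" unfolding k_def by simp
  ultimately have "k \<in> Mon" unfolding Mon_def by auto
  moreover have "\<forall>a\<in>A. k a = a"
  proof
    fix a assume "a \<in> A"
    hence "a \<in> omega" "a \<noteq> 0" using assms(2) by (auto simp: omega_mem)
    hence "k a = inv_into omega \<rho> (\<rho> a)" unfolding k_def using assms(8) \<open>a \<in> A\<close> by simp
    thus "k a = a" using inv_into_f_f[OF rinj \<open>a \<in> omega\<close>] by simp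
  qed
  ultimately have "k \<in> Mon_fix A" unfolding Mon_fix_def by auto
  hence "act k x = x" using assms(6) unfolding supported_on_def by auto
  have "act \<sigma> x = act (\<rho> \<circ> k) x" using rk by simp
  also have "\<dots> = act \<rho> (act k x)"
  proof -
    have "\<forall>f\<in>Mon. \<forall>g\<in>Mon. \<forall>x\<in>X. act (f \<circ> g) x = act f (act g x)" using assms(4) unfolding M_set_def by blast
    then show ?thesis using assms(5,7) \<open>k \<in> Mon\<close> by blast
  qed
  finally show ?thesis using \<open>act k x = x\<close> by simp
qed

lemma agree:
  assumes "\<sigma> \<in> Mon" "\<tau> \<in> Mon" "A \<subseteq> omega" "infinite (omega - A)" "M_set X act" "x \<in> X"
    "supported_on act x A" "\<forall>a\<in>A. \<sigma> a = \<tau> a"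
  shows "act \<sigma> x = act \<tau> x"
proof -
  obtain \<rho> where r: "\<rho> \<in> Mon" "\<forall>a\<in>A. \<rho> a = \<sigma> a" "\<rho> ` omega = omega"
    using bijext[OF assms(1,3,4)] by blast
  have "act \<sigma> x = act \<rho> x" using factor[OF assms(1,3,4,5,6,7) r] .
  moreover have "act \<tau> x = act \<rho> x" using factor[OF assms(2,3,4,5,6,7) r(1) _ r(3)] r(2) assms(8) by auto
  ultimately show ?thesis by simp
qed

lemma supp_mono: "supported_on act x A \<Longrightarrow> A \<subseteq> B \<Longrightarrow> supported_on act x B"
  unfolding supported_on_def Mon_fix_def by auto

theorem lemma1p12:
  fixes X :: "'x set" and act :: "(nat \<Rightarrow> nat) \<Rightarrow> 'x \<Rightarrow> 'x" and f :: "nat \<Rightarrow> nat"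
  assumes "mild X act"
    and "f \<in> Mon"
  shows "inj_on (act f) X"
proof (rule inj_onI)
  fix x y assume x: "x \<in> X" and y: "y \<in> X" and fxy: "act f x = act f y"
  have MS: "M_set X act" using assms(1) unfolding mild_def by auto
  have comp: "\<And>g h z. g \<in> Mon \<Longrightarrow> h \<in> Mon \<Longrightarrow> z \<in> X \<Longrightarrow> act (g \<circ> h) z = act g (act h z)"
    using MS unfolding M_set_def by auto
  obtain A where A: "A \<subseteq> omega" "infinite (omega - A)" "supported_on act x A"
    using assms(1) x unfolding mild_def by auto
  obtain B where B: "B \<subseteq> omega" "infinite (omega - B)" "supported_on act y B"
    using assms(1) y unfolding mild_def by auto
  obtain T where T: "T \<subseteq> omega - B" "infinite T" "infinite ((omega - B) - T)" "infinite ((omega - A) - T)"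
    using split3[OF B(2) A(2)] by blast
  obtain k where k: "k \<in> Mon" "\<forall>s\<in>B. k s = id s" "k ` (omega - B) \<subseteq> T"
    using extE[of B id T] B T by auto
  have kz: "\<And>z. z \<in> A \<union> B \<Longrightarrow> (z \<in> B \<and> k z = z) \<or> k z \<in> T"
  proof -
    fix z assume "z \<in> A \<union> B"
    show "(z \<in> B \<and> k z = z) \<or> k z \<in> T"
    proof (cases "z \<in> B")
      case True then show ?thesis using k(2) by simp
    next
      case False then have "z \<in> omega - B" using \<open>z \<in> A \<union> B\<close> A(1) by blast
      then show ?thesis using k(3) by blast
    qed
  qed
  have "k ` (A \<union> B) \<subseteq> B \<union> T" using kz by fastforce
  hence "(omega - B) - T \<subseteq> omega - k ` (A \<union> B)" by auto
  hence "infinite (omega - k ` (A \<union> B))" using T(3) infinite_super by blast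
  then obtain g where g: "g \<in> Mon" "\<forall>s\<in>A \<union> B. g (f s) = k s"
    using extE2[OF assms(2) k(1), of "A \<union> B"] A(1) B(1) by blast
  have gf: "g \<circ> f \<in> Mon" using Mon_comp g assms(2) by blast
  have "k \<in> Mon_fix B" using k unfolding Mon_fix_def by auto
  hence "y = act k y" using B(3) unfolding supported_on_def by auto
  also have "\<dots> = act (g \<circ> f) y" using agree[OF k(1) gf B(1,2) MS y B(3)] g by auto
  also have "\<dots> = act g (act f y)" using comp g assms(2) y by auto
  also have "\<dots> = act g (act f x)" using fxy by simp
  also have "\<dots> = act (g \<circ> f) x" using comp g assms(2) x by auto
  also have "\<dots> = act k x" using agree[OF gf k(1) A(1,2) MS x A(3)] g by auto
  finally have yk: "y = act k x" .
  have "supported_on act y (k ` A)"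
    unfolding supported_on_def
  proof
    fix h assume h: "h \<in> Mon_fix (k ` A)"
    hence hM: "h \<in> Mon" unfolding Mon_fix_def by auto
    have "act h y = act (h \<circ> k) x" using yk comp hM k(1) x by auto
    also have "\<dots> = act k x"
      using agree[OF Mon_comp[OF hM k(1)] k(1) A(1,2) MS x A(3)] h unfolding Mon_fix_def by auto
    finally show "act h y = y" using yk by simp
  qed
  define S where "S = A \<union> k ` A"
  have kA: "k ` A \<subseteq> A \<union> T" using kz by fastforce
  hence "(omega - A) - T \<subseteq> omega - S" unfolding S_def by auto
  hence Sinf: "infinite (omega - S)" using infinite_super T(4) by metis
  have "k ` omega \<subseteq> omega" using k unfolding Mon_def by auto
  hence So: "S \<subseteq> omega" using A unfolding S_def by auto
  have xS: "supported_on act x S" by (rule supp_mono[OF A(3)]) (simp add: S_def)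
  have yS: "supported_on act y S" by (rule supp_mono[OF \<open>supported_on act y (k ` A)\<close>]) (simp add: S_def)
  have "infinite (omega - id ` S)" using Sinf by simp
  then obtain g2 where g2: "g2 \<in> Mon" "\<forall>s\<in>S. g2 (f s) = id s"
    using extE2[OF assms(2) Mon_id So \<open>infinite (omega - id ` S)\<close>] by blast
  have g2f: "g2 \<circ> f \<in> Mon_fix S" using Mon_comp[OF g2(1) assms(2)] g2 unfolding Mon_fix_def by auto
  have "x = act (g2 \<circ> f) x" using xS g2f unfolding supported_on_def by auto
  also have "\<dots> = act g2 (act f x)" using comp[OF g2(1) assms(2) x] by simp
  also have "\<dots> = act g2 (act f y)" using fxy by simp
  also have "\<dots> = act (g2 \<circ> f) y" using comp[OF g2(1) assms(2) y] by simp
  also have "\<dots> = y" using yS g2f unfolding supported_on_def by auto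
  finally show "x = y" .
qed

end
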